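(* Let $M^2$ be a minimal surface of general type in $\mathbb R^4$, parameterized by semi-canonical parameters $(u,v)$, and suppose $\gamma_1=0$ identically. Then $E=E(u)$ depends only on $u$; the invariants $\mu=\mu(u)$, $\nu=\nu(u)$, $\gamma_2=\gamma_2(u)$, $\beta_2=\beta_2(u)$ depend only on $u$; $\beta_1=0$; and $$\gamma_2=\frac{1}{4\sqrt E}\big(\ln|\mu^2-\nu^2|\big)_u,\qquad \beta_2=\frac{1}{\sqrt E}\Big(\ln\sqrt{\Big|\frac{\mu+\nu}{\mu-\nu}\Big|}\Big)_u .$$
   Context: $\mathbb R^4$ carries the standard metric $g=\langle\cdot,\cdot\rangle$ and flat connection $\nabla'$; everything is smooth and local. For a regular surface $M^2: z=z(u,v)$ let $E,F,G$ be the first fundamental form coefficients, $\sigma$ the second fundamental form, $K$ the Gauss curvature, and $\varkappa$ the curvature of the normal connection, $\varkappa=g(R^\perp(x,y)n_2,n_1)$ for a positively oriented orthonormal frame $(x,y,n_1,n_2)$ with $x,y$ tangent. Minimal means $\sigma(x,x)+\sigma(y,y)=0$ for orthonormal tangent $x,y$. A minimal surface is of general type if $K^2-\varkappa^2>0$ and $\varkappa\neq0$ everywhere. The ellipse of curvature at $p$ is $\{\sigma(v,v): v\in T_pM^2,\ |v|=1\}$; a tangent line is canonical if it is collinear with an axis of this ellipse. The geometric frame is a positively oriented orthonormal frame $\{x,y,n_1,n_2\}$ with $x,y$ canonical tangent fields and $n_1,n_2$ normal, satisfying $\nabla'_xx=\gamma_1y+\nu n_1$, $\nabla'_xy=-\gamma_1x+\mu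 n_2$, $\nabla'_yx=-\gamma_2y+\mu n_2$, $\nabla'_yy=\gamma_2x-\nu n_1$, $\nabla'_xn_1=-\nu x+\beta_1n_2$, $\nabla'_yn_1=\nu y+\beta_2n_2$, $\nabla'_xn_2=-\mu y-\beta_1n_1$, $\nabla'_yn_2=-\mu x-\beta_2n_1$, with $\mu>0$, $\nu\ne0$, $\mu^2\ne\nu^2$; the functions $\nu,\mu,\gamma_1,\gamma_2,\beta_1,\beta_2$ are the invariants of $M^2$. Parameters $(u,v)$ are semi-canonical if the parametric lines are integral curves of the canonical tangents, with $F=0$, $x=z_u/\sqrt E$, $y=z_v/\sqrt G$; then $\gamma_1=-y(\ln\sqrt E)$, $\gamma_2=-x(\ln\sqrt G)$. *)

theory Defs
  imports "HOL-Analysis.Analysis"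
begin

definition pu :: "(real \<times> real \<Rightarrow> 'a::real_normed_vector) \<Rightarrow> real \<times> real \<Rightarrow> 'a" where
  "pu f p = vector_derivative (\<lambda>t. f (t, snd p)) (at (fst p))"

definition pv :: "(real \<times> real \<Rightarrow> 'a::real_normed_vector) \<Rightarrow> real \<times> real \<Rightarrow> 'a" where
  "pv f p = vector_derivative (\<lambda>t. f (fst p, t)) (at (snd p))"

fun Ck_on :: "nat \<Rightarrow> (real \<times> real) set \<Rightarrow> (real \<times> real \<Rightarrow> 'a::real_normed_vector) \<Rightarrow> bool" where
  "Ck_on 0 U f = continuous_on U f"
| "Ck_on (Suc k) U f = (f differentiable_on U \<and> Ck_on k U (pu f) \<and> Ck_on k U (pv f))"

definition smooth_on2 :: "(real \<times> real) set \<Rightarrow> (real \<times> real \<Rightarrow> 'a::real_normed_vector) \<Rightarrow> bool" where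
  "smooth_on2 U f = (\<forall>k. Ck_on k U f)"

definition fE :: "(real \<times> real \<Rightarrow> real^4) \<Rightarrow> real \<times> real \<Rightarrow> real" where
  "fE z p = pu z p \<bullet> pu z p"
definition fF :: "(real \<times> real \<Rightarrow> real^4) \<Rightarrow> real \<times> real \<Rightarrow> real" where
  "fF z p = pu z p \<bullet> pv z p"
definition fG :: "(real \<times> real \<Rightarrow> real^4) \<Rightarrow> real \<times> real \<Rightarrow> real" where
  "fG z p = pv z p \<bullet> pv z p"

text \<open>Flat connection of R^4 along the fields x = z_u/sqrt E and y = z_v/sqrt G:
  nabla'_x X = (1/sqrt E) X_u,  nabla'_y X = (1/sqrt G) X_v.\<close>

definition Dx :: "(real \<times> real \<Rightarrow> real^4) \<Rightarrow> (real \<times> real \<Rightarrow> real^4) \<Rightarrow> real \<times> real \<Rightarrow> real^4" where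
  "Dx z X p = (1 / sqrt (fE z p)) *\<^sub>R pu X p"
definition Dy :: "(real \<times> real \<Rightarrow> real^4) \<Rightarrow> (real \<times> real \<Rightarrow> real^4) \<Rightarrow> real \<times> real \<Rightarrow> real^4" where
  "Dy z X p = (1 / sqrt (fG z p)) *\<^sub>R pv X p"

text \<open>Orthogonal projections onto the tangent plane span(x,y) and the normal plane span(n1,n2)
  (x,y,n1,n2 orthonormal).\<close>

definition proj2 :: "real^4 \<Rightarrow> real^4 \<Rightarrow> real^4 \<Rightarrow> real^4" where
  "proj2 a b w = (w \<bullet> a) *\<^sub>R a + (w \<bullet> b) *\<^sub>R b"

definition geometric_frame ::
  "(real \<times> real) set \<Rightarrow> (real \<times> real \<Rightarrow> real^4) \<Rightarrow> (real \<times> real \<Rightarrow> real^4) \<Rightarrow> (real \<times> real \<Rightarrow> real^4)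
   \<Rightarrow> (real \<times> real \<Rightarrow> real) \<Rightarrow> (real \<times> real \<Rightarrow> real) \<Rightarrow> (real \<times> real \<Rightarrow> real) \<Rightarrow> (real \<times> real \<Rightarrow> real)
   \<Rightarrow> (real \<times> real \<Rightarrow> real) \<Rightarrow> (real \<times> real \<Rightarrow> real) \<Rightarrow> bool" where
  "geometric_frame U z n1 n2 \<nu> \<mu> \<gamma>1 \<gamma>2 \<beta>1 \<beta>2 \<longleftrightarrow>
    (let x = (\<lambda>p. (1 / sqrt (fE z p)) *\<^sub>R pu z p);
         y = (\<lambda>p. (1 / sqrt (fG z p)) *\<^sub>R pv z p)
     in smooth_on2 U n1 \<and> smooth_on2 U n2 \<and>
        smooth_on2 U \<nu> \<and> smooth_on2 U \<mu> \<and> smooth_on2 U \<gamma>1 \<and> smooth_on2 U \<gamma>2 \<and>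
        smooth_on2 U \<beta>1 \<and> smooth_on2 U \<beta>2 \<and>
        (\<forall>p\<in>U.
          x p \<bullet> x p = 1 \<and> y p \<bullet> y p = 1 \<and> n1 p \<bullet> n1 p = 1 \<and> n2 p \<bullet> n2 p = 1 \<and>
          x p \<bullet> y p = 0 \<and> x p \<bullet> n1 p = 0 \<and> x p \<bullet> n2 p = 0 \<and>
          y p \<bullet> n1 p = 0 \<and> y p \<bullet> n2 p = 0 \<and> n1 p \<bullet> n2 p = 0 \<and>
          det (vector [x p, y p, n1 p, n2 p] :: real^4^4) > 0 \<and>
          Dx z x p = \<gamma>1 p *\<^sub>R y p + \<nu> p *\<^sub>R n1 p \<and>
          Dx z y p = - \<gamma>1 p *\<^sub>R x p + \<mu> p *\<^sub>R n2 p \<and>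
          Dy z x p = - \<gamma>2 p *\<^sub>R y p + \<mu> p *\<^sub>R n2 p \<and>
          Dy z y p = \<gamma>2 p *\<^sub>R x p - \<nu> p *\<^sub>R n1 p \<and>
          Dx z n1 p = - \<nu> p *\<^sub>R x p + \<beta>1 p *\<^sub>R n2 p \<and>
          Dy z n1 p = \<nu> p *\<^sub>R y p + \<beta>2 p *\<^sub>R n2 p \<and>
          Dx z n2 p = - \<mu> p *\<^sub>R y p - \<beta>1 p *\<^sub>R n1 p \<and>
          Dy z n2 p = - \<mu> p *\<^sub>R x p - \<beta>2 p *\<^sub>R n1 p \<and>
          \<mu> p > 0 \<and> \<nu> p \<noteq> 0 \<and> (\<mu> p)\<^sup>2 \<noteq> (\<nu> p)\<^sup>2))"

text \<open>Second fundamental form, Gauss curvature and normal curvature, computed in the frame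
  {x,y,n1,n2}: sigma(X,Y) = normal part of nabla'_X Y; the Levi-Civita connection is the tangent
  part of nabla'; the normal connection is the normal part of nabla' applied to normal fields;
  [x,y] = nabla'_x y - nabla'_y x is expanded in the basis x,y.\<close>

definition minimal_general_type ::
  "(real \<times> real) set \<Rightarrow> (real \<times> real \<Rightarrow> real^4) \<Rightarrow> (real \<times> real \<Rightarrow> real^4) \<Rightarrow> (real \<times> real \<Rightarrow> real^4) \<Rightarrow> bool" where
  "minimal_general_type U z n1 n2 \<longleftrightarrow>
    (let x = (\<lambda>p. (1 / sqrt (fE z p)) *\<^sub>R pu z p);
         y = (\<lambda>p. (1 / sqrt (fG z p)) *\<^sub>R pv z p);
         T = (\<lambda>p w. proj2 (x p) (y p) w);
         N = (\<lambda>p w. proj2 (n1 p) (n2 p) w);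
         brk = (\<lambda>p. Dx z y p - Dy z x p);
         K = (\<lambda>p. (T p (Dx z (\<lambda>q. T q (Dy z y q)) p)
                   - T p (Dy z (\<lambda>q. T q (Dx z y q)) p)
                   - ((brk p \<bullet> x p) *\<^sub>R T p (Dx z y p) + (brk p \<bullet> y p) *\<^sub>R T p (Dy z y p)))
                  \<bullet> x p);
         \<kappa> = (\<lambda>p. (N p (Dx z (\<lambda>q. N q (Dy z n2 q)) p)
                   - N p (Dy z (\<lambda>q. N q (Dx z n2 q)) p)
                   - ((brk p \<bullet> x p) *\<^sub>R N p (Dx z n2 p) + (brk p \<bullet> y p) *\<^sub>R N p (Dy z n2 p)))
                  \<bullet> n1 p)
     in \<forall>p\<in>U. N p (Dx z x p) + N p (Dy z y p) = 0 \<and>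
               (K p)\<^sup>2 - (\<kappa> p)\<^sup>2 > 0 \<and> \<kappa> p \<noteq> 0)"

end

theory Submission
  imports Defs
begin


definition HU :: "(real \<times> real \<Rightarrow> 'a::real_normed_vector) \<Rightarrow> 'a \<Rightarrow> real \<times> real \<Rightarrow> bool" where
  "HU f D p \<longleftrightarrow> ((\<lambda>t. f (t, snd p)) has_vector_derivative D) (at (fst p))"
definition HV :: "(real \<times> real \<Rightarrow> 'a::real_normed_vector) \<Rightarrow> 'a \<Rightarrow> real \<times> real \<Rightarrow> bool" where
  "HV f D p \<longleftrightarrow> ((\<lambda>t. f (fst p, t)) has_vector_derivative D) (at (snd p))"

lemma lnabs_eq: "ln \<bar>x::real\<bar> = ln (x^2) / 2"
proof (cases "x = 0")
  case False
  have "x^2 = \<bar>x\<bar>^2" by simp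
  moreover have "ln (\<bar>x\<bar>^2) = real 2 * ln \<bar>x\<bar>" using False ln_realpow zero_less_abs_iff by blast
  ultimately show ?thesis by simp
qed simp

lemma lnsqrtabs_eq: "ln (sqrt \<bar>x::real\<bar>) = ln (x^2) / 4"
proof (cases "x = 0")
  case False
  then show ?thesis by (simp add: ln_sqrt lnabs_eq)
qed simp

lemma LD_lnabs:
  assumes "(f has_vector_derivative a) (at t)" "f t \<noteq> (0::real)"
  shows "((\<lambda>s. ln \<bar>f s\<bar>) has_vector_derivative (a / f t)) (at t)"
proof -
  have d: "(f has_real_derivative a) (at t)" using assms(1) by (simp add: has_real_derivative_iff_has_vector_derivative)
  have "((\<lambda>s. ln ((f s)^2) / 2) has_real_derivative (1 / (f t)^2 * (2 * f t * a)) / 2) (at t)"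
    using assms(2) by (auto intro!: derivative_eq_intros d)
  moreover have "(1 / (f t)^2 * (2 * f t * a)) / 2 = a / f t" using assms(2) by (simp add: field_simps power2_eq_square)
  ultimately show ?thesis by (simp add: lnabs_eq has_real_derivative_iff_has_vector_derivative)
qed

lemma LD_lnsqrtabs:
  assumes "(f has_vector_derivative a) (at t)" "f t \<noteq> (0::real)"
  shows "((\<lambda>s. ln (sqrt \<bar>f s\<bar>)) has_vector_derivative (a / (2 * f t))) (at t)"
proof -
  have d: "(f has_real_derivative a) (at t)" using assms(1) by (simp add: has_real_derivative_iff_has_vector_derivative)
  have "((\<lambda>s. ln ((f s)^2) / 4) has_real_derivative (1 / (f t)^2 * (2 * f t * a)) / 4) (at t)"
    using assms(2) by (auto intro!: derivative_eq_intros d)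
  moreover have "(1 / (f t)^2 * (2 * f t * a)) / 4 = a / (2 * f t)" using assms(2) by (simp add: field_simps power2_eq_square)
  ultimately show ?thesis by (simp add: lnsqrtabs_eq has_real_derivative_iff_has_vector_derivative)
qed

lemma LD_sqrt:
  assumes "(f has_vector_derivative a) (at t)" "f t > (0::real)"
  shows "((\<lambda>s. sqrt (f s)) has_vector_derivative (a / (2 * sqrt (f t)))) (at t)"
proof -
  have d: "(f has_real_derivative a) (at t)" using assms(1) by (simp add: has_real_derivative_iff_has_vector_derivative)
  have "((\<lambda>s. sqrt (f s)) has_real_derivative (inverse (sqrt (f t)) / 2 * a)) (at t)"
    using assms(2) by (auto intro!: derivative_eq_intros d)
  then show ?thesis by (simp add: has_real_derivative_iff_has_vector_derivative field_simps)
qed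

lemma LD_inv:
  assumes "(f has_vector_derivative a) (at t)" "f t \<noteq> (0::real)"
  shows "((\<lambda>s. 1 / f s) has_vector_derivative (- a / (f t)^2)) (at t)"
proof -
  have d: "(f has_real_derivative a) (at t)" using assms(1) by (simp add: has_real_derivative_iff_has_vector_derivative)
  have "((\<lambda>s. 1 / f s) has_real_derivative - (1 * a) / (f t * f t)) (at t)"
    using assms(2) DERIV_divide[OF DERIV_const d, of 1] by simp
  then show ?thesis by (simp add: has_real_derivative_iff_has_vector_derivative power2_eq_square)
qed

lemma LD_div:
  assumes "(f has_vector_derivative a) (at t)" "(g has_vector_derivative b) (at t)" "g t \<noteq> (0::real)"
  shows "((\<lambda>s. f s / g s) has_vector_derivative ((a * g t - f t * b) / (g t)^2)) (at t)"
proof -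
  have d: "(f has_real_derivative a) (at t)" "(g has_real_derivative b) (at t)" using assms(1,2) by (simp_all add: has_real_derivative_iff_has_vector_derivative)
  have "((\<lambda>s. f s / g s) has_real_derivative (a * g t - f t * b) / (g t * g t)) (at t)"
    using assms(3) DERIV_divide[OF d] by simp
  then show ?thesis by (simp add: has_real_derivative_iff_has_vector_derivative power2_eq_square)
qed

lemma LD_inner:
  assumes "(f has_vector_derivative a) (at t)" "(g has_vector_derivative b) (at t)"
  shows "((\<lambda>s. inner (f s) (g s)) has_vector_derivative (inner (f t) b + inner a (g t))) (at t)"
  using bounded_bilinear.has_vector_derivative[OF bounded_bilinear_inner assms] .

lemma LD_mult:
  fixes f g :: "real \<Rightarrow> real"
  assumes "(f has_vector_derivative a) (at t)" "(g has_vector_derivative b) (at t)"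
  shows "((\<lambda>s. f s * g s) has_vector_derivative (f t * b + a * g t)) (at t)"
  using has_vector_derivative_mult[OF assms] .

lemma LD_scaleR:
  assumes "(f has_vector_derivative a) (at t)" "(g has_vector_derivative b) (at t)"
  shows "((\<lambda>s. f s *\<^sub>R g s) has_vector_derivative (f t *\<^sub>R b + a *\<^sub>R g t)) (at t)"
  using has_vector_derivative_scaleR[OF assms(1)[unfolded has_real_derivative_iff_has_vector_derivative[symmetric]] assms(2)] .

lemma HU_pu: "HU f D p \<Longrightarrow> pu f p = D"
  unfolding HU_def pu_def by (rule vector_derivative_at)
lemma HV_pv: "HV f D p \<Longrightarrow> pv f p = D"
  unfolding HV_def pv_def by (rule vector_derivative_at)

lemma diff_HU:
  assumes "f differentiable (at p)"
  shows "HU f (pu f p) p"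
proof -
  have "(\<lambda>t. (t, snd p)) differentiable (at (fst p))"
    by (intro differentiableI has_derivative_Pair) (auto intro!: derivative_intros)
  moreover have "f differentiable (at ((\<lambda>t. (t, snd p)) (fst p)))" using assms by simp
  ultimately have "(\<lambda>t. f (t, snd p)) differentiable (at (fst p))"
    using differentiable_chain_at[of "\<lambda>t. (t, snd p)" "fst p" f] by (simp add: o_def)
  then show ?thesis unfolding HU_def pu_def by (simp add: vector_derivative_works[symmetric])
qed

lemma diff_HV:
  assumes "f differentiable (at p)"
  shows "HV f (pv f p) p"
proof -
  have "(\<lambda>t. (fst p, t)) differentiable (at (snd p))"
    by (intro differentiableI has_derivative_Pair) (auto intro!: derivative_intros)
  moreover have "f differentiable (at ((\<lambda>t. (fst p, t)) (snd p)))" using assms by simp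
  ultimately have "(\<lambda>t. f (fst p, t)) differentiable (at (snd p))"
    using differentiable_chain_at[of "\<lambda>t. (fst p, t)" "snd p" f] by (simp add: o_def)
  then show ?thesis unfolding HV_def pv_def by (simp add: vector_derivative_works[symmetric])
qed

lemma HU_unique_on:
  assumes U: "open U" and p: "p \<in> U" and eq: "\<forall>q\<in>U. f q = g q" and d1: "HU f D1 p" and d2: "HU g D2 p"
  shows "D1 = D2"
proof -
  let ?S = "(\<lambda>t. (t, snd p)) -` U"
  have oS: "open ?S" by (rule open_vimage[OF U]) (auto intro!: continuous_intros)
  have "fst p \<in> ?S" using p by simp
  have "((\<lambda>t. f (t, snd p)) has_vector_derivative D2) (at (fst p))"
    by (rule has_vector_derivative_transform_within_open[OF d2[unfolded HU_def] oS \<open>fst p \<in> ?S\<close>]) (use eq in auto)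
  then show ?thesis using d1 unfolding HU_def by (rule vector_derivative_unique_at[rotated])
qed

lemma HV_unique_on:
  assumes U: "open U" and p: "p \<in> U" and eq: "\<forall>q\<in>U. f q = g q" and d1: "HV f D1 p" and d2: "HV g D2 p"
  shows "D1 = D2"
proof -
  let ?S = "(\<lambda>t. (fst p, t)) -` U"
  have oS: "open ?S" by (rule open_vimage[OF U]) (auto intro!: continuous_intros)
  have "snd p \<in> ?S" using p by simp
  have "((\<lambda>t. f (fst p, t)) has_vector_derivative D2) (at (snd p))"
    by (rule has_vector_derivative_transform_within_open[OF d2[unfolded HV_def] oS \<open>snd p \<in> ?S\<close>]) (use eq in auto)
  then show ?thesis using d1 unfolding HV_def by (rule vector_derivative_unique_at[rotated])
qed

lemma HU_const: "HU (\<lambda>q. c) 0 p" unfolding HU_def by simp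
lemma HV_const: "HV (\<lambda>q. c) 0 p" unfolding HV_def by simp

lemma HU_zero_on: "open U \<Longrightarrow> p \<in> U \<Longrightarrow> \<forall>q\<in>U. f q = c \<Longrightarrow> HU f D p \<Longrightarrow> D = 0"
  using HU_unique_on[of U p f "\<lambda>q. c" D 0] HU_const by blast
lemma HV_zero_on: "open U \<Longrightarrow> p \<in> U \<Longrightarrow> \<forall>q\<in>U. f q = c \<Longrightarrow> HV f D p \<Longrightarrow> D = 0"
  using HV_unique_on[of U p f "\<lambda>q. c" D 0] HV_const by blast

lemma HU_add: "HU f a p \<Longrightarrow> HU g b p \<Longrightarrow> HU (\<lambda>q. f q + g q) (a + b) p"
  unfolding HU_def by (rule has_vector_derivative_add)
lemma HV_add: "HV f a p \<Longrightarrow> HV g b p \<Longrightarrow> HV (\<lambda>q. f q + g q) (a + b) p"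
  unfolding HV_def by (rule has_vector_derivative_add)
lemma HU_diff: "HU f a p \<Longrightarrow> HU g b p \<Longrightarrow> HU (\<lambda>q. f q - g q) (a - b) p"
  unfolding HU_def by (rule has_vector_derivative_diff)
lemma HV_diff: "HV f a p \<Longrightarrow> HV g b p \<Longrightarrow> HV (\<lambda>q. f q - g q) (a - b) p"
  unfolding HV_def by (rule has_vector_derivative_diff)
lemma HU_minus: "HU f a p \<Longrightarrow> HU (\<lambda>q. - f q) (- a) p"
  unfolding HU_def by (rule has_vector_derivative_minus)
lemma HV_minus: "HV f a p \<Longrightarrow> HV (\<lambda>q. - f q) (- a) p"
  unfolding HV_def by (rule has_vector_derivative_minus)

lemma HU_inner: "HU f a p \<Longrightarrow> HU g b p \<Longrightarrow> HU (\<lambda>q. inner (f q) (g q)) (inner (f p) b + inner a (g p)) p"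
  unfolding HU_def using LD_inner[of "\<lambda>t. f (t, snd p)" a "fst p" "\<lambda>t. g (t, snd p)" b] by simp
lemma HV_inner: "HV f a p \<Longrightarrow> HV g b p \<Longrightarrow> HV (\<lambda>q. inner (f q) (g q)) (inner (f p) b + inner a (g p)) p"
  unfolding HV_def using LD_inner[of "\<lambda>t. f (fst p, t)" a "snd p" "\<lambda>t. g (fst p, t)" b] by simp
lemma HU_mult: "HU f a p \<Longrightarrow> HU g b p \<Longrightarrow> HU (\<lambda>q. f q * g q) (f p * b + a * g p) p" for f g :: "real\<times>real \<Rightarrow> real"
  unfolding HU_def using LD_mult[of "\<lambda>t. f (t, snd p)" a "fst p" "\<lambda>t. g (t, snd p)" b] by simp
lemma HV_mult: "HV f a p \<Longrightarrow> HV g b p \<Longrightarrow> HV (\<lambda>q. f q * g q) (f p * b + a * g p) p" for f g :: "real\<times>real \<Rightarrow> real"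
  unfolding HV_def using LD_mult[of "\<lambda>t. f (fst p, t)" a "snd p" "\<lambda>t. g (fst p, t)" b] by simp
lemma HU_scaleR: "HU f a p \<Longrightarrow> HU g b p \<Longrightarrow> HU (\<lambda>q. f q *\<^sub>R g q) (f p *\<^sub>R b + a *\<^sub>R g p) p"
  unfolding HU_def using LD_scaleR[of "\<lambda>t. f (t, snd p)" a "fst p" "\<lambda>t. g (t, snd p)" b] by simp
lemma HV_scaleR: "HV f a p \<Longrightarrow> HV g b p \<Longrightarrow> HV (\<lambda>q. f q *\<^sub>R g q) (f p *\<^sub>R b + a *\<^sub>R g p) p"
  unfolding HV_def using LD_scaleR[of "\<lambda>t. f (fst p, t)" a "snd p" "\<lambda>t. g (fst p, t)" b] by simp
lemma HU_sqrt: "HU f a p \<Longrightarrow> f p > 0 \<Longrightarrow> HU (\<lambda>q. sqrt (f q)) (a / (2 * sqrt (f p))) p" for f :: "real\<times>real \<Rightarrow> real"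
  unfolding HU_def using LD_sqrt[of "\<lambda>t. f (t, snd p)" a "fst p"] by simp
lemma HV_sqrt: "HV f a p \<Longrightarrow> f p > 0 \<Longrightarrow> HV (\<lambda>q. sqrt (f q)) (a / (2 * sqrt (f p))) p" for f :: "real\<times>real \<Rightarrow> real"
  unfolding HV_def using LD_sqrt[of "\<lambda>t. f (fst p, t)" a "snd p"] by simp
lemma HU_inv: "HU f a p \<Longrightarrow> f p \<noteq> 0 \<Longrightarrow> HU (\<lambda>q. 1 / f q) (- a / (f p)^2) p" for f :: "real\<times>real \<Rightarrow> real"
  unfolding HU_def using LD_inv[of "\<lambda>t. f (t, snd p)" a "fst p"] by simp
lemma HV_inv: "HV f a p \<Longrightarrow> f p \<noteq> 0 \<Longrightarrow> HV (\<lambda>q. 1 / f q) (- a / (f p)^2) p" for f :: "real\<times>real \<Rightarrow> real"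
  unfolding HV_def using LD_inv[of "\<lambda>t. f (fst p, t)" a "snd p"] by simp
lemma HU_div: "HU f a p \<Longrightarrow> HU g b p \<Longrightarrow> g p \<noteq> 0 \<Longrightarrow> HU (\<lambda>q. f q / g q) ((a * g p - f p * b) / (g p)^2) p" for f g :: "real\<times>real \<Rightarrow> real"
  unfolding HU_def using LD_div[of "\<lambda>t. f (t, snd p)" a "fst p" "\<lambda>t. g (t, snd p)" b] by simp
lemma HU_lnabs: "HU f a p \<Longrightarrow> f p \<noteq> 0 \<Longrightarrow> HU (\<lambda>q. ln \<bar>f q\<bar>) (a / f p) p" for f :: "real\<times>real \<Rightarrow> real"
  unfolding HU_def using LD_lnabs[of "\<lambda>t. f (t, snd p)" a "fst p"] by simp
lemma HU_lnsqrtabs: "HU f a p \<Longrightarrow> f p \<noteq> 0 \<Longrightarrow> HU (\<lambda>q. ln (sqrt \<bar>f q\<bar>)) (a / (2 * f p)) p" for f :: "real\<times>real \<Rightarrow> real"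
  unfolding HU_def using LD_lnsqrtabs[of "\<lambda>t. f (t, snd p)" a "fst p"] by simp



lemma HU_DERIV: "HU f D (s, t) \<Longrightarrow> ((\<lambda>r. f (r, t)) has_real_derivative D) (at s)" for f :: "real\<times>real \<Rightarrow> real"
  unfolding HU_def by (simp add: has_real_derivative_iff_has_vector_derivative)
lemma HV_DERIV: "HV f D (s, t) \<Longrightarrow> ((\<lambda>r. f (s, r)) has_real_derivative D) (at t)" for f :: "real\<times>real \<Rightarrow> real"
  unfolding HV_def by (simp add: has_real_derivative_iff_has_vector_derivative)

lemma schwarz_real:
  fixes f fu fv fuv fvu :: "real \<times> real \<Rightarrow> real"
  assumes U: "open U" and p: "p \<in> U"
    and du: "\<forall>q\<in>U. HU f (fu q) q" and dv: "\<forall>q\<in>U. HV f (fv q) q"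
    and duv: "\<forall>q\<in>U. HV fu (fuv q) q" and dvu: "\<forall>q\<in>U. HU fv (fvu q) q"
    and c1: "continuous_on U fuv" and c2: "continuous_on U fvu"
  shows "fuv p = fvu p"
proof (rule ccontr)
  assume ne: "fuv p \<noteq> fvu p"
  define d where "d = \<bar>fuv p - fvu p\<bar>"
  have d: "d > 0" using ne by (simp add: d_def)
  then have d2: "d/2 > 0" by simp
  obtain r1 where r1: "r1 > 0" "\<forall>q\<in>U. dist q p < r1 \<longrightarrow> dist (fuv q) (fuv p) < d/2"
    using c1 p d2 unfolding continuous_on_iff by blast
  obtain r2 where r2: "r2 > 0" "\<forall>q\<in>U. dist q p < r2 \<longrightarrow> dist (fvu q) (fvu p) < d/2"
    using c2 p d2 unfolding continuous_on_iff by blast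
  obtain r3 where r3: "r3 > 0" "ball p r3 \<subseteq> U" using U p open_contains_ball by blast
  define r where "r = min r1 (min r2 r3)"
  have r: "r > 0" "r \<le> r1" "r \<le> r2" "r \<le> r3" using r1 r2 r3 by (auto simp: r_def)
  define h where "h = r / 2"
  have h: "h > 0" using r by (simp add: h_def)
  obtain a b where pab: "p = (a, b)" by (cases p)
  have box: "(s, t) \<in> U \<and> dist (s, t) p < r" if "\<bar>s - a\<bar> \<le> h" "\<bar>t - b\<bar> \<le> h" for s t
  proof -
    have "(s - a)^2 \<le> h^2" using that power_mono[of "\<bar>s-a\<bar>" h 2] by simp
    moreover have "(t - b)^2 \<le> h^2" using that power_mono[of "\<bar>t-b\<bar>" h 2] by simp
    ultimately
    have "(s - a)^2 + (t - b)^2 \<le> 2 * h^2" by simp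
    moreover have "2 * h^2 < r^2" using r by (simp add: h_def power2_eq_square field_simps)
    ultimately have "(s - a)^2 + (t - b)^2 < r^2" by linarith
    then have "sqrt ((s - a)^2 + (t - b)^2) < sqrt (r^2)" by (rule real_sqrt_less_mono)
    then have "dist (s, t) p < r" using r by (simp add: pab dist_Pair_Pair dist_real_def)
    then show ?thesis using r r3 by (auto simp: dist_commute)
  qed
  have "\<exists>\<xi>. a < \<xi> \<and> \<xi> < a + h \<and>
      (f (a+h, b+h) - f (a+h, b)) - (f (a, b+h) - f (a, b)) = ((a + h) - a) * (fu (\<xi>, b+h) - fu (\<xi>, b))"
  proof (rule MVT2[where f = "\<lambda>s. f (s, b+h) - f (s, b)"])
    show "a < a + h" using h by simp
    fix s assume "a \<le> s" "s \<le> a + h"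
    then have "(s, b+h) \<in> U" "(s, b) \<in> U" using box[of s "b+h"] box[of s b] h by auto
    then show "((\<lambda>s. f (s, b+h) - f (s, b)) has_real_derivative fu (s, b+h) - fu (s, b)) (at s)"
      using du by (intro DERIV_diff HU_DERIV) auto
  qed
  then obtain \<xi> where xi: "a < \<xi>" "\<xi> < a + h"
    "(f (a+h, b+h) - f (a+h, b)) - (f (a, b+h) - f (a, b)) = h * (fu (\<xi>, b+h) - fu (\<xi>, b))" by auto
  have "\<exists>\<eta>. b < \<eta> \<and> \<eta> < b + h \<and> fu (\<xi>, b+h) - fu (\<xi>, b) = ((b + h) - b) * fuv (\<xi>, \<eta>)"
  proof (rule MVT2[where f = "\<lambda>t. fu (\<xi>, t)"])
    show "b < b + h" using h by simp
    fix t assume "b \<le> t" "t \<le> b + h"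
    then have "(\<xi>, t) \<in> U" using box[of \<xi> t] xi by auto
    then show "((\<lambda>t. fu (\<xi>, t)) has_real_derivative fuv (\<xi>, t)) (at t)"
      using duv by (intro HV_DERIV) auto
  qed
  then obtain \<eta> where eta: "b < \<eta>" "\<eta> < b + h" "fu (\<xi>, b+h) - fu (\<xi>, b) = h * fuv (\<xi>, \<eta>)" by auto
  have "\<exists>\<eta>. b < \<eta> \<and> \<eta> < b + h \<and>
      (f (a+h, b+h) - f (a, b+h)) - (f (a+h, b) - f (a, b)) = ((b + h) - b) * (fv (a+h, \<eta>) - fv (a, \<eta>))"
  proof (rule MVT2[where f = "\<lambda>t. f (a+h, t) - f (a, t)"])
    show "b < b + h" using h by simp
    fix t assume "b \<le> t" "t \<le> b + h"
    then have "(a+h, t) \<in> U" "(a, t) \<in> U" using box[of "a+h" t] box[of a t] h by auto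
    then show "((\<lambda>t. f (a+h, t) - f (a, t)) has_real_derivative fv (a+h, t) - fv (a, t)) (at t)"
      using dv by (intro DERIV_diff HV_DERIV) auto
  qed
  then obtain \<eta>' where eta': "b < \<eta>'" "\<eta>' < b + h"
    "(f (a+h, b+h) - f (a, b+h)) - (f (a+h, b) - f (a, b)) = h * (fv (a+h, \<eta>') - fv (a, \<eta>'))" by auto
  have "\<exists>\<xi>. a < \<xi> \<and> \<xi> < a + h \<and> fv (a+h, \<eta>') - fv (a, \<eta>') = ((a + h) - a) * fvu (\<xi>, \<eta>')"
  proof (rule MVT2[where f = "\<lambda>s. fv (s, \<eta>')"])
    show "a < a + h" using h by simp
    fix s assume "a \<le> s" "s \<le> a + h"
    then have "(s, \<eta>') \<in> U" using box[of s \<eta>'] eta' by auto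
    then show "((\<lambda>s. fv (s, \<eta>')) has_real_derivative fvu (s, \<eta>')) (at s)"
      using dvu by (intro HU_DERIV) auto
  qed
  then obtain \<xi>' where xi': "a < \<xi>'" "\<xi>' < a + h" "fv (a+h, \<eta>') - fv (a, \<eta>') = h * fvu (\<xi>', \<eta>')" by auto
  have "h * (h * fuv (\<xi>, \<eta>)) = h * (h * fvu (\<xi>', \<eta>'))"
    using xi(3) eta(3) eta'(3) xi'(3) by (simp add: algebra_simps)
  then have eq: "fuv (\<xi>, \<eta>) = fvu (\<xi>', \<eta>')" using h by simp
  have q1: "(\<xi>, \<eta>) \<in> U \<and> dist (\<xi>, \<eta>) p < r" using box xi eta by auto
  have q2: "(\<xi>', \<eta>') \<in> U \<and> dist (\<xi>', \<eta>') p < r" using box xi' eta' by auto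
  have "dist (fuv (\<xi>, \<eta>)) (fuv p) < d/2" using r1(2) q1 r by auto
  moreover have "dist (fvu (\<xi>', \<eta>')) (fvu p) < d/2" using r2(2) q2 r by auto
  ultimately have "\<bar>fuv p - fvu p\<bar> < d" using eq unfolding dist_real_def by linarith
  then show False by (simp add: d_def)
qed

lemma schwarz_vec:
  fixes f fu fv fuv fvu :: "real \<times> real \<Rightarrow> 'a::real_inner"
  assumes U: "open U" and p: "p \<in> U"
    and du: "\<forall>q\<in>U. HU f (fu q) q" and dv: "\<forall>q\<in>U. HV f (fv q) q"
    and duv: "\<forall>q\<in>U. HV fu (fuv q) q" and dvu: "\<forall>q\<in>U. HU fv (fvu q) q"
    and c1: "continuous_on U fuv" and c2: "continuous_on U fvu"
  shows "fuv p = fvu p"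
proof -
  have key: "inner (fuv p) c = inner (fvu p) c" for c
  proof (rule schwarz_real[OF U p, where f = "\<lambda>q. inner (f q) c" and fu = "\<lambda>q. inner (fu q) c" and fv = "\<lambda>q. inner (fv q) c"])
    show "\<forall>q\<in>U. HU (\<lambda>q. inner (f q) c) (inner (fu q) c) q"
      using du HU_inner[OF _ HU_const, of f _ _ c] by simp
    show "\<forall>q\<in>U. HV (\<lambda>q. inner (f q) c) (inner (fv q) c) q"
      using dv HV_inner[OF _ HV_const, of f _ _ c] by simp
    show "\<forall>q\<in>U. HV (\<lambda>q. inner (fu q) c) (inner (fuv q) c) q"
      using duv HV_inner[OF _ HV_const, of fu _ _ c] by simp
    show "\<forall>q\<in>U. HU (\<lambda>q. inner (fv q) c) (inner (fvu q) c) q"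
      using dvu HU_inner[OF _ HU_const, of fv _ _ c] by simp
    show "continuous_on U (\<lambda>q. inner (fuv q) c)" using c1 by (intro continuous_intros)
    show "continuous_on U (\<lambda>q. inner (fvu q) c)" using c2 by (intro continuous_intros)
  qed
  have "inner (fuv p - fvu p) (fuv p - fvu p) = 0"
    using key[of "fuv p - fvu p"] by (simp add: inner_diff_left)
  then show ?thesis by simp
qed

lemma smooth_pu: "smooth_on2 U f \<Longrightarrow> smooth_on2 U (pu f)"
  unfolding smooth_on2_def by (metis Ck_on.simps(2))
lemma smooth_pv: "smooth_on2 U f \<Longrightarrow> smooth_on2 U (pv f)"
  unfolding smooth_on2_def by (metis Ck_on.simps(2))
lemma smooth_cont: "smooth_on2 U f \<Longrightarrow> continuous_on U f"
  unfolding smooth_on2_def by (metis Ck_on.simps(1))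
lemma smooth_diff: "smooth_on2 U f \<Longrightarrow> f differentiable_on U"
  unfolding smooth_on2_def by (metis Ck_on.simps(2))
lemma smooth_HU: "open U \<Longrightarrow> smooth_on2 U f \<Longrightarrow> p \<in> U \<Longrightarrow> HU f (pu f p) p"
  by (meson diff_HU differentiable_on_eq_differentiable_at smooth_diff)
lemma smooth_HV: "open U \<Longrightarrow> smooth_on2 U f \<Longrightarrow> p \<in> U \<Longrightarrow> HV f (pv f p) p"
  by (meson diff_HV differentiable_on_eq_differentiable_at smooth_diff)

lemma smooth_schwarz:
  fixes f :: "real \<times> real \<Rightarrow> 'a::real_inner"
  assumes "open U" "smooth_on2 U f" "p \<in> U"
  shows "pv (pu f) p = pu (pv f) p"
  using assms
  by (intro schwarz_vec[where f = f and fu = "pu f" and fv = "pv f"])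
     (auto intro: smooth_HU smooth_HV smooth_pu smooth_pv smooth_cont)



lemma HU_sq: "HU f a p \<Longrightarrow> HU (\<lambda>q. (f q)^2) (2 * f p * a) p" for f :: "real\<times>real \<Rightarrow> real"
  using HU_mult[of f a p f a] by (simp add: power2_eq_square algebra_simps)
lemma HV_sq: "HV f a p \<Longrightarrow> HV (\<lambda>q. (f q)^2) (2 * f p * a) p" for f :: "real\<times>real \<Rightarrow> real"
  using HV_mult[of f a p f a] by (simp add: power2_eq_square algebra_simps)

lemma aux_div: "s \<noteq> 0 \<Longrightarrow> d \<noteq> 0 \<Longrightarrow> (c * (s * d)) / d\<^sup>2 / (2 * (s / d)) = c / (2::real)"
  by (simp add: field_simps power2_eq_square)

locale surf =
  fixes U :: "(real \<times> real) set"
    and z n1 n2 :: "real \<times> real \<Rightarrow> real^4"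
    and \<nu> \<mu> \<gamma>1 \<gamma>2 \<beta>1 \<beta>2 :: "real \<times> real \<Rightarrow> real"
  assumes U: "open U"
    and sz: "smooth_on2 U z"
    and EG: "\<forall>p\<in>U. fE z p * fG z p - (fF z p)\<^sup>2 > 0"
    and F0: "\<forall>p\<in>U. fF z p = 0"
    and gf: "geometric_frame U z n1 n2 \<nu> \<mu> \<gamma>1 \<gamma>2 \<beta>1 \<beta>2"
    and g10: "\<forall>p\<in>U. \<gamma>1 p = 0"
begin

abbreviation "x \<equiv> (\<lambda>p. (1 / sqrt (fE z p)) *\<^sub>R pu z p)"
abbreviation "y \<equiv> (\<lambda>p. (1 / sqrt (fG z p)) *\<^sub>R pv z p)"

lemma GF: "smooth_on2 U n1 \<and> smooth_on2 U n2 \<and>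
        smooth_on2 U \<nu> \<and> smooth_on2 U \<mu> \<and> smooth_on2 U \<gamma>1 \<and> smooth_on2 U \<gamma>2 \<and>
        smooth_on2 U \<beta>1 \<and> smooth_on2 U \<beta>2 \<and>
        (\<forall>p\<in>U.
          x p \<bullet> x p = 1 \<and> y p \<bullet> y p = 1 \<and> n1 p \<bullet> n1 p = 1 \<and> n2 p \<bullet> n2 p = 1 \<and>
          x p \<bullet> y p = 0 \<and> x p \<bullet> n1 p = 0 \<and> x p \<bullet> n2 p = 0 \<and>
          y p \<bullet> n1 p = 0 \<and> y p \<bullet> n2 p = 0 \<and> n1 p \<bullet> n2 p = 0 \<and>
          det (vector [x p, y p, n1 p, n2 p] :: real^4^4) > 0 \<and>
          Dx z x p = \<gamma>1 p *\<^sub>R y p + \<nu> p *\<^sub>R n1 p \<and>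
          Dx z y p = - \<gamma>1 p *\<^sub>R x p + \<mu> p *\<^sub>R n2 p \<and>
          Dy z x p = - \<gamma>2 p *\<^sub>R y p + \<mu> p *\<^sub>R n2 p \<and>
          Dy z y p = \<gamma>2 p *\<^sub>R x p - \<nu> p *\<^sub>R n1 p \<and>
          Dx z n1 p = - \<nu> p *\<^sub>R x p + \<beta>1 p *\<^sub>R n2 p \<and>
          Dy z n1 p = \<nu> p *\<^sub>R y p + \<beta>2 p *\<^sub>R n2 p \<and>
          Dx z n2 p = - \<mu> p *\<^sub>R y p - \<beta>1 p *\<^sub>R n1 p \<and>
          Dy z n2 p = - \<mu> p *\<^sub>R x p - \<beta>2 p *\<^sub>R n1 p \<and>
          \<mu> p > 0 \<and> \<nu> p \<noteq> 0 \<and> (\<mu> p)\<^sup>2 \<noteq> (\<nu> p)\<^sup>2)"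
  using gf unfolding geometric_frame_def Let_def .

abbreviation "Z1 \<equiv> pu z"
abbreviation "Z2 \<equiv> pv z"
abbreviation "Z11 \<equiv> pu (pu z)"
abbreviation "Z12 \<equiv> pv (pu z)"
abbreviation "Z21 \<equiv> pu (pv z)"
abbreviation "Z22 \<equiv> pv (pv z)"
abbreviation "ee \<equiv> \<lambda>q. sqrt (fE z q)"
abbreviation "gg \<equiv> \<lambda>q. sqrt (fG z q)"
definition "eu q = (Z1 q \<bullet> Z11 q + Z11 q \<bullet> Z1 q) / (2 * sqrt (fE z q))"
definition "ev q = (Z1 q \<bullet> Z12 q + Z12 q \<bullet> Z1 q) / (2 * sqrt (fE z q))"
definition "gu q = (Z2 q \<bullet> Z21 q + Z21 q \<bullet> Z2 q) / (2 * sqrt (fG z q))"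
definition "gv q = (Z2 q \<bullet> Z22 q + Z22 q \<bullet> Z2 q) / (2 * sqrt (fG z q))"

lemma sm: "smooth_on2 U n1" "smooth_on2 U n2" "smooth_on2 U \<nu>" "smooth_on2 U \<mu>"
  "smooth_on2 U \<gamma>2" "smooth_on2 U \<beta>1" "smooth_on2 U \<beta>2"
  "smooth_on2 U (pu z)" "smooth_on2 U (pv z)" "smooth_on2 U z"
  using GF sz smooth_pu smooth_pv by auto

lemma pos: assumes "q \<in> U" shows "fE z q > 0" "fG z q > 0"
proof -
  have a: "fE z q \<ge> 0" "fG z q \<ge> 0" unfolding fE_def fG_def by simp_all
  have "fE z q * fG z q > 0" using EG F0 assms by auto
  then show "fE z q > 0" "fG z q > 0" using a by (auto simp: zero_less_mult_iff)
qed

lemma HZ: assumes "q \<in> U"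
  shows "HU z (Z1 q) q" "HV z (Z2 q) q" "HU Z1 (Z11 q) q" "HV Z1 (Z12 q) q" "HU Z2 (Z21 q) q" "HV Z2 (Z22 q) q"
    "HU n1 (pu n1 q) q" "HV n1 (pv n1 q) q" "HU n2 (pu n2 q) q" "HV n2 (pv n2 q) q"
    "HU \<nu> (pu \<nu> q) q" "HV \<nu> (pv \<nu> q) q" "HU \<mu> (pu \<mu> q) q" "HV \<mu> (pv \<mu> q) q"
    "HU \<gamma>2 (pu \<gamma>2 q) q" "HV \<gamma>2 (pv \<gamma>2 q) q" "HU \<beta>1 (pu \<beta>1 q) q" "HV \<beta>1 (pv \<beta>1 q) q"
    "HU \<beta>2 (pu \<beta>2 q) q" "HV \<beta>2 (pv \<beta>2 q) q"
  using smooth_HU[OF U _ assms] smooth_HV[OF U _ assms] sm by auto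

lemma fE_eq: "fE z = (\<lambda>q. Z1 q \<bullet> Z1 q)" by (rule ext) (simp add: fE_def)
lemma fG_eq: "fG z = (\<lambda>q. Z2 q \<bullet> Z2 q)" by (rule ext) (simp add: fG_def)

lemma HE: assumes "q \<in> U"
  shows "HU (fE z) (Z1 q \<bullet> Z11 q + Z11 q \<bullet> Z1 q) q" "HV (fE z) (Z1 q \<bullet> Z12 q + Z12 q \<bullet> Z1 q) q"
    "HU (fG z) (Z2 q \<bullet> Z21 q + Z21 q \<bullet> Z2 q) q" "HV (fG z) (Z2 q \<bullet> Z22 q + Z22 q \<bullet> Z2 q) q"
  unfolding fE_eq fG_eq using HZ[OF assms] by (auto intro: HU_inner HV_inner)

lemma He: assumes "q \<in> U"
  shows "HU ee (eu q) q" "HV ee (ev q) q" "HU gg (gu q) q" "HV gg (gv q) q"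
  using HE[OF assms] pos[OF assms] unfolding eu_def ev_def gu_def gv_def by (auto intro: HU_sqrt HV_sqrt)

lemma lin:
  fixes A B C :: "real^4"
  assumes "e > 0" "g > 0" "(1/g) *\<^sub>R ((1/e) *\<^sub>R A + (- a / e^2) *\<^sub>R B) = C"
  shows "A = (a / e) *\<^sub>R B + (e * g) *\<^sub>R C"
proof -
  have "(1/g) * ((1/e) * A$i + (- a / e^2) * B$i) = C$i" for i
    using arg_cong[OF assms(3), of "\<lambda>v. v$i"] by simp
  then have "A$i = (a / e) * B$i + (e * g) * C$i" for i
    using assms(1,2) by (simp add: field_simps power2_eq_square)
  then show ?thesis by (simp add: vec_eq_iff)
qed

lemma lin2:
  fixes A C :: "real^4"
  assumes "e > 0" "(1/e) *\<^sub>R A = C"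
  shows "A = e *\<^sub>R C"
  using assms by auto

lemma orth: assumes q: "q \<in> U" shows
 "Z1 q \<bullet> Z2 q = 0" "Z2 q \<bullet> Z1 q = 0" "Z1 q \<bullet> n1 q = 0" "n1 q \<bullet> Z1 q = 0"
 "Z1 q \<bullet> n2 q = 0" "n2 q \<bullet> Z1 q = 0" "Z2 q \<bullet> n1 q = 0" "n1 q \<bullet> Z2 q = 0"
 "Z2 q \<bullet> n2 q = 0" "n2 q \<bullet> Z2 q = 0" "n1 q \<bullet> n1 q = 1" "n2 q \<bullet> n2 q = 1"
 "n1 q \<bullet> n2 q = 0" "n2 q \<bullet> n1 q = 0" "Z1 q \<bullet> Z1 q = fE z q" "Z2 q \<bullet> Z2 q = fG z q"
proof -
  have p: "sqrt (fE z q) > 0" "sqrt (fG z q) > 0" using pos[OF q] by auto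
  have G: "x q \<bullet> n1 q = 0" "x q \<bullet> n2 q = 0" "y q \<bullet> n1 q = 0" "y q \<bullet> n2 q = 0"
    "n1 q \<bullet> n1 q = 1" "n2 q \<bullet> n2 q = 1" "n1 q \<bullet> n2 q = 0"
    using GF q by auto
  show "Z1 q \<bullet> Z2 q = 0" "Z2 q \<bullet> Z1 q = 0" using F0 q by (auto simp: fF_def inner_commute)
  show "Z1 q \<bullet> n1 q = 0" "n1 q \<bullet> Z1 q = 0" "Z1 q \<bullet> n2 q = 0" "n2 q \<bullet> Z1 q = 0"
    "Z2 q \<bullet> n1 q = 0" "n1 q \<bullet> Z2 q = 0" "Z2 q \<bullet> n2 q = 0" "n2 q \<bullet> Z2 q = 0"
    using G p by (auto simp: inner_commute)
  show "n1 q \<bullet> n1 q = 1" "n2 q \<bullet> n2 q = 1" "n1 q \<bullet> n2 q = 0" "n2 q \<bullet> n1 q = 0"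
    using G by (auto simp: inner_commute)
  show "Z1 q \<bullet> Z1 q = fE z q" "Z2 q \<bullet> Z2 q = fG z q" by (simp_all add: fE_def fG_def)
qed

lemma Hxy: assumes q: "q \<in> U" shows
  "HU x ((1 / ee q) *\<^sub>R Z11 q + (- eu q / (ee q)^2) *\<^sub>R Z1 q) q"
  "HV x ((1 / ee q) *\<^sub>R Z12 q + (- ev q / (ee q)^2) *\<^sub>R Z1 q) q"
  "HU y ((1 / gg q) *\<^sub>R Z21 q + (- gu q / (gg q)^2) *\<^sub>R Z2 q) q"
  "HV y ((1 / gg q) *\<^sub>R Z22 q + (- gv q / (gg q)^2) *\<^sub>R Z2 q) q"
proof -
  have p: "sqrt (fE z q) \<noteq> 0" "sqrt (fG z q) \<noteq> 0" using pos[OF q] by auto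
  show "HU x ((1 / ee q) *\<^sub>R Z11 q + (- eu q / (ee q)^2) *\<^sub>R Z1 q) q"
    using HU_scaleR[OF HU_inv[OF He(1)[OF q] p(1)] HZ(3)[OF q]] .
  show "HV x ((1 / ee q) *\<^sub>R Z12 q + (- ev q / (ee q)^2) *\<^sub>R Z1 q) q"
    using HV_scaleR[OF HV_inv[OF He(2)[OF q] p(1)] HZ(4)[OF q]] .
  show "HU y ((1 / gg q) *\<^sub>R Z21 q + (- gu q / (gg q)^2) *\<^sub>R Z2 q) q"
    using HU_scaleR[OF HU_inv[OF He(3)[OF q] p(2)] HZ(5)[OF q]] .
  show "HV y ((1 / gg q) *\<^sub>R Z22 q + (- gv q / (gg q)^2) *\<^sub>R Z2 q) q"
    using HV_scaleR[OF HV_inv[OF He(4)[OF q] p(2)] HZ(6)[OF q]] .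
qed

lemma V: assumes q: "q \<in> U" shows
  "Z11 q = (eu q / ee q) *\<^sub>R Z1 q + (ee q * ee q) *\<^sub>R (\<gamma>1 q *\<^sub>R y q + \<nu> q *\<^sub>R n1 q)"
  "Z12 q = (ev q / ee q) *\<^sub>R Z1 q + (ee q * gg q) *\<^sub>R (- \<gamma>2 q *\<^sub>R y q + \<mu> q *\<^sub>R n2 q)"
  "Z21 q = (gu q / gg q) *\<^sub>R Z2 q + (gg q * ee q) *\<^sub>R (- \<gamma>1 q *\<^sub>R x q + \<mu> q *\<^sub>R n2 q)"
  "Z22 q = (gv q / gg q) *\<^sub>R Z2 q + (gg q * gg q) *\<^sub>R (\<gamma>2 q *\<^sub>R x q - \<nu> q *\<^sub>R n1 q)"
  "pu n1 q = ee q *\<^sub>R (- \<nu> q *\<^sub>R x q + \<beta>1 q *\<^sub>R n2 q)"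
  "pv n1 q = gg q *\<^sub>R (\<nu> q *\<^sub>R y q + \<beta>2 q *\<^sub>R n2 q)"
  "pu n2 q = ee q *\<^sub>R (- \<mu> q *\<^sub>R y q - \<beta>1 q *\<^sub>R n1 q)"
  "pv n2 q = gg q *\<^sub>R (- \<mu> q *\<^sub>R x q - \<beta>2 q *\<^sub>R n1 q)"
proof -
  have p: "sqrt (fE z q) > 0" "sqrt (fG z q) > 0" using pos[OF q] by auto
  have fr: "Dx z x q = \<gamma>1 q *\<^sub>R y q + \<nu> q *\<^sub>R n1 q"
          "Dx z y q = - \<gamma>1 q *\<^sub>R x q + \<mu> q *\<^sub>R n2 q"
          "Dy z x q = - \<gamma>2 q *\<^sub>R y q + \<mu> q *\<^sub>R n2 q"
          "Dy z y q = \<gamma>2 q *\<^sub>R x q - \<nu> q *\<^sub>R n1 q"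
          "Dx z n1 q = - \<nu> q *\<^sub>R x q + \<beta>1 q *\<^sub>R n2 q"
          "Dy z n1 q = \<nu> q *\<^sub>R y q + \<beta>2 q *\<^sub>R n2 q"
          "Dx z n2 q = - \<mu> q *\<^sub>R y q - \<beta>1 q *\<^sub>R n1 q"
          "Dy z n2 q = - \<mu> q *\<^sub>R x q - \<beta>2 q *\<^sub>R n1 q"
    using GF q by auto
  note px = HU_pu[OF Hxy(1)[OF q]] HV_pv[OF Hxy(2)[OF q]] HU_pu[OF Hxy(3)[OF q]] HV_pv[OF Hxy(4)[OF q]]
  show "Z11 q = (eu q / ee q) *\<^sub>R Z1 q + (ee q * ee q) *\<^sub>R (\<gamma>1 q *\<^sub>R y q + \<nu> q *\<^sub>R n1 q)"
    using fr(1) unfolding Dx_def px by (intro lin p)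
  show "Z12 q = (ev q / ee q) *\<^sub>R Z1 q + (ee q * gg q) *\<^sub>R (- \<gamma>2 q *\<^sub>R y q + \<mu> q *\<^sub>R n2 q)"
    using fr(3) unfolding Dy_def px by (intro lin p)
  show "Z21 q = (gu q / gg q) *\<^sub>R Z2 q + (gg q * ee q) *\<^sub>R (- \<gamma>1 q *\<^sub>R x q + \<mu> q *\<^sub>R n2 q)"
    using fr(2) unfolding Dx_def px by (intro lin p)
  show "Z22 q = (gv q / gg q) *\<^sub>R Z2 q + (gg q * gg q) *\<^sub>R (\<gamma>2 q *\<^sub>R x q - \<nu> q *\<^sub>R n1 q)"
    using fr(4) unfolding Dy_def px by (intro lin p)
  show "pu n1 q = ee q *\<^sub>R (- \<nu> q *\<^sub>R x q + \<beta>1 q *\<^sub>R n2 q)"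
    using fr(5) p unfolding Dx_def by (intro lin2)
  show "pv n1 q = gg q *\<^sub>R (\<nu> q *\<^sub>R y q + \<beta>2 q *\<^sub>R n2 q)"
    using fr(6) p unfolding Dy_def by (intro lin2)
  show "pu n2 q = ee q *\<^sub>R (- \<mu> q *\<^sub>R y q - \<beta>1 q *\<^sub>R n1 q)"
    using fr(7) p unfolding Dx_def by (intro lin2)
  show "pv n2 q = gg q *\<^sub>R (- \<mu> q *\<^sub>R x q - \<beta>2 q *\<^sub>R n1 q)"
    using fr(8) p unfolding Dy_def by (intro lin2)
qed

lemmas IP = inner_add_left inner_add_right inner_diff_left inner_diff_right inner_scaleR_left inner_scaleR_right
  inner_minus_left inner_minus_right

lemma S1: "q \<in> U \<Longrightarrow> Z12 q = Z21 q"
  using smooth_schwarz[OF U sz] .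

lemma sq: assumes q: "q \<in> U" shows "sqrt (fE z q) * sqrt (fE z q) = fE z q" "sqrt (fG z q) * sqrt (fG z q) = fG z q"
  "sqrt (fE z q) > 0" "sqrt (fG z q) > 0"
  using pos[OF q] by auto

lemma D1: assumes q: "q \<in> U" shows "ev q = 0" "gu q = - sqrt (fE z q) * sqrt (fG z q) * \<gamma>2 q"
proof -
  have g1: "\<gamma>1 q = 0" using g10 q by auto
  have "Z12 q \<bullet> Z1 q = Z21 q \<bullet> Z1 q" using S1[OF q] by simp
  then have "ev q / sqrt (fE z q) * fE z q = 0"
    unfolding V(2,3)[OF q] using q by (simp add: IP orth g1)
  then show "ev q = 0" using sq[OF q] by (auto simp: field_simps)
  have "Z12 q \<bullet> Z2 q = Z21 q \<bullet> Z2 q" using S1[OF q] by simp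
  then have "gu q / sqrt (fG z q) * fG z q = - sqrt (fE z q) * \<gamma>2 q * fG z q"
    unfolding V(2,3)[OF q] using q sq[OF q] by (simp add: IP orth g1 field_simps)
  then have "(gu q + sqrt (fE z q) * sqrt (fG z q) * \<gamma>2 q) * fG z q = 0" using sq[OF q]
    by (auto simp: field_simps)
  then have "gu q + sqrt (fE z q) * sqrt (fG z q) * \<gamma>2 q = 0" using pos[OF q]
    by (metis mult_eq_0_iff less_irrefl)
  then show "gu q = - sqrt (fE z q) * sqrt (fG z q) * \<gamma>2 q" by linarith
qed

lemma S2: "q \<in> U \<Longrightarrow> pv Z11 q = pu Z12 q"
  using smooth_schwarz[OF U sm(8)] .
lemma S3: "q \<in> U \<Longrightarrow> pv Z21 q = pu Z22 q"
  using smooth_schwarz[OF U sm(9)] .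

lemma HZ2: assumes "q \<in> U"
  shows "HV Z11 (pv Z11 q) q" "HU Z12 (pu Z12 q) q" "HV Z21 (pv Z21 q) q" "HU Z22 (pu Z22 q) q"
  using smooth_HU[OF U _ assms] smooth_HV[OF U _ assms] smooth_pu[OF sm(8)] smooth_pv[OF sm(8)]
    smooth_pu[OF sm(9)] smooth_pv[OF sm(9)] by auto

lemma gauss: assumes q: "q \<in> U" shows "pu \<gamma>2 q = sqrt (fE z q) * ((\<gamma>2 q)^2 - (\<mu> q)^2 - (\<nu> q)^2)"
proof -
  have g1: "\<forall>q\<in>U. \<gamma>1 q = 0" using g10 by auto
  have A: "\<forall>q\<in>U. Z2 q \<bullet> Z11 q = 0"
    using g1 by (auto simp: V IP orth)
  have A': "Z2 q \<bullet> pv Z11 q + Z22 q \<bullet> Z11 q = 0"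
    by (rule HV_zero_on[OF U q A HV_inner[OF HZ(6)[OF q] HZ2(1)[OF q]]])
  have B: "\<forall>q\<in>U. Z2 q \<bullet> Z12 q = - (sqrt (fE z q) * \<gamma>2 q * fG z q)"
    using sq by (auto simp: V IP orth D1)
  have B': "Z2 q \<bullet> pu Z12 q + Z21 q \<bullet> Z12 q = - ((sqrt (fE z q) * \<gamma>2 q) * (Z2 q \<bullet> Z21 q + Z21 q \<bullet> Z2 q)
        + (sqrt (fE z q) * pu \<gamma>2 q + eu q * \<gamma>2 q) * fG z q)"
    by (rule HU_unique_on[OF U q B HU_inner[OF HZ(5)[OF q] HZ2(2)[OF q]]
          HU_minus[OF HU_mult[OF HU_mult[OF He(1)[OF q] HZ(15)[OF q]] HE(3)[OF q]]]])
  have "Z21 q \<bullet> Z12 q - Z22 q \<bullet> Z11 q = - ((sqrt (fE z q) * \<gamma>2 q) * (Z2 q \<bullet> Z21 q + Z21 q \<bullet> Z2 q)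
        + (sqrt (fE z q) * pu \<gamma>2 q + eu q * \<gamma>2 q) * fG z q)"
    using A' B' S2[OF q] by simp
  then have H: "sqrt (fE z q) * sqrt (fG z q) * (\<mu> q * (sqrt (fG z q) * sqrt (fE z q) * \<mu> q) +
       \<gamma>2 q * (sqrt (fE z q) * \<gamma>2 q * fG z q) / sqrt (fG z q)) -
      (eu q * (fG z q * (\<gamma>2 q * fE z q)) / fE z q - fE z q * \<nu> q * (fG z q * \<nu> q)) =
      sqrt (fE z q) * \<gamma>2 q * (2 * (fG z q * (sqrt (fE z q) * \<gamma>2 q))) -
      (sqrt (fE z q) * pu \<gamma>2 q + eu q * \<gamma>2 q) * fG z q"
    unfolding V[OF q] using q pos[OF q] by (simp add: IP orth D1 g1)
  obtain e g where eg: "e = sqrt (fE z q)" "g = sqrt (fG z q)" by simp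
  have E: "fE z q = e * e" "fG z q = g * g" "e > 0" "g > 0" using eg sq[OF q] by auto
  have H2: "e * g * (\<mu> q * (g * e * \<mu> q) + \<gamma>2 q * (e * \<gamma>2 q * (g*g)) / g) -
      (eu q * ((g*g) * (\<gamma>2 q * (e*e))) / (e*e) - (e*e) * \<nu> q * ((g*g) * \<nu> q)) =
      e * \<gamma>2 q * (2 * ((g*g) * (e * \<gamma>2 q))) - (e * pu \<gamma>2 q + eu q * \<gamma>2 q) * (g*g)"
    using H[unfolded eg[symmetric]] unfolding E(1,2) .
  have r1: "\<gamma>2 q * (e * \<gamma>2 q * (g*g)) / g = e * g * \<gamma>2 q * \<gamma>2 q" using E by (simp add: field_simps)
  have r2: "eu q * ((g*g) * (\<gamma>2 q * (e*e))) / (e*e) = eu q * g * g * \<gamma>2 q" using E by (simp add: field_simps)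
  have H3: "e * g * (\<mu> q * (g * e * \<mu> q) + e * g * \<gamma>2 q * \<gamma>2 q) -
      (eu q * g * g * \<gamma>2 q - (e*e) * \<nu> q * ((g*g) * \<nu> q)) =
      e * \<gamma>2 q * (2 * ((g*g) * (e * \<gamma>2 q))) - (e * pu \<gamma>2 q + eu q * \<gamma>2 q) * (g*g)"
    using H2 unfolding r1 r2 .
  have "(e * g * g) * pu \<gamma>2 q = (e * g * g) * (e * ((\<gamma>2 q)^2 - (\<mu> q)^2 - (\<nu> q)^2))"
    using H3 by algebra
  then have "(e * g * g) * (pu \<gamma>2 q - e * ((\<gamma>2 q)^2 - (\<mu> q)^2 - (\<nu> q)^2)) = 0" by algebra
  moreover have "e \<noteq> 0" "g \<noteq> 0" using E(3,4) by simp_all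
  ultimately have "pu \<gamma>2 q = e * ((\<gamma>2 q)^2 - (\<mu> q)^2 - (\<nu> q)^2)" by simp
  then show ?thesis unfolding eg .
qed

lemma cod1: assumes q: "q \<in> U" shows "pv \<nu> q = - sqrt (fG z q) * \<mu> q * \<beta>1 q"
proof -
  have g1: "\<forall>q\<in>U. \<gamma>1 q = 0" using g10 by auto
  have C: "\<forall>q\<in>U. n1 q \<bullet> Z11 q = fE z q * \<nu> q"
    using g1 sq by (auto simp: V IP orth)
  have C': "n1 q \<bullet> pv Z11 q + pv n1 q \<bullet> Z11 q = fE z q * pv \<nu> q + (Z1 q \<bullet> Z12 q + Z12 q \<bullet> Z1 q) * \<nu> q"
    by (rule HV_unique_on[OF U q C HV_inner[OF HZ(8)[OF q] HZ2(1)[OF q]] HV_mult[OF HE(2)[OF q] HZ(12)[OF q]]])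
  have D: "\<forall>q\<in>U. n1 q \<bullet> Z12 q = 0"
    using g1 sq by (auto simp: V IP orth D1)
  have D': "n1 q \<bullet> pu Z12 q + pu n1 q \<bullet> Z12 q = 0"
    by (rule HU_zero_on[OF U q D HU_inner[OF HZ(7)[OF q] HZ2(2)[OF q]]])
  have "fE z q * pv \<nu> q + (Z1 q \<bullet> Z12 q + Z12 q \<bullet> Z1 q) * \<nu> q = pv n1 q \<bullet> Z11 q - pu n1 q \<bullet> Z12 q"
    using C' D' S2[OF q] by simp
  then have H: "fE z q * pv \<nu> q = - (sqrt (fE z q) * sqrt (fG z q) * (\<mu> q * (sqrt (fE z q) * \<beta>1 q)))"
    unfolding V[OF q] using q pos[OF q] by (simp add: IP orth D1 g1)
  obtain e g where eg: "e = sqrt (fE z q)" "g = sqrt (fG z q)" by simp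
  have E: "fE z q = e * e" "fG z q = g * g" "e > 0" "g > 0" using eg sq[OF q] by auto
  have "e * e * pv \<nu> q = - (e * g * (\<mu> q * (e * \<beta>1 q)))"
    using H[unfolded eg[symmetric]] unfolding E(1,2) .
  then have "(e * e) * (pv \<nu> q - (- g * \<mu> q * \<beta>1 q)) = 0" by algebra
  moreover have "e \<noteq> 0" using E(3) by simp
  ultimately have "pv \<nu> q = - g * \<mu> q * \<beta>1 q" by simp
  then show ?thesis unfolding eg .
qed

lemma cod2: assumes q: "q \<in> U" shows "pu \<mu> q = 2 * sqrt (fE z q) * \<gamma>2 q * \<mu> q + sqrt (fE z q) * \<nu> q * \<beta>2 q"
proof -
  have g1: "\<forall>q\<in>U. \<gamma>1 q = 0" using g10 by auto
  have C: "\<forall>q\<in>U. n2 q \<bullet> Z11 q = 0"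
    using g1 sq by (auto simp: V IP orth)
  have C': "n2 q \<bullet> pv Z11 q + pv n2 q \<bullet> Z11 q = 0"
    by (rule HV_zero_on[OF U q C HV_inner[OF HZ(10)[OF q] HZ2(1)[OF q]]])
  have D: "\<forall>q\<in>U. n2 q \<bullet> Z12 q = sqrt (fE z q) * sqrt (fG z q) * \<mu> q"
    using g1 sq by (auto simp: V IP orth D1)
  have D': "n2 q \<bullet> pu Z12 q + pu n2 q \<bullet> Z12 q = (sqrt (fE z q) * sqrt (fG z q)) * pu \<mu> q
      + (sqrt (fE z q) * gu q + eu q * sqrt (fG z q)) * \<mu> q"
    by (rule HU_unique_on[OF U q D HU_inner[OF HZ(9)[OF q] HZ2(2)[OF q]]
          HU_mult[OF HU_mult[OF He(1)[OF q] He(3)[OF q]] HZ(13)[OF q]]])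
  have "(sqrt (fE z q) * sqrt (fG z q)) * pu \<mu> q
      + (sqrt (fE z q) * gu q + eu q * sqrt (fG z q)) * \<mu> q = pu n2 q \<bullet> Z12 q - pv n2 q \<bullet> Z11 q"
    using C' D' S2[OF q] by simp
  then have H: "sqrt (fE z q) * sqrt (fG z q) * pu \<mu> q + (eu q * sqrt (fG z q) - sqrt (fE z q) * (sqrt (fE z q) * sqrt (fG z q) * \<gamma>2 q)) * \<mu> q = sqrt (fE z q) * sqrt (fG z q) * (\<gamma>2 q * (sqrt (fE z q) * \<mu> q)) - (- (eu q * (sqrt (fG z q) * \<mu> q)) - fE z q * \<nu> q * (sqrt (fG z q) * \<beta>2 q))"
    unfolding V[OF q] using q pos[OF q] by (simp add: IP orth D1 g1)
  obtain e g where eg: "e = sqrt (fE z q)" "g = sqrt (fG z q)" by simp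
  have E: "fE z q = e * e" "fG z q = g * g" "e > 0" "g > 0" using eg sq[OF q] by auto
  have "e * g * pu \<mu> q + (eu q * g - e * (e * g * \<gamma>2 q)) * \<mu> q = e * g * (\<gamma>2 q * (e * \<mu> q)) - (- (eu q * (g * \<mu> q)) - (e * e) * \<nu> q * (g * \<beta>2 q))"
    using H[unfolded eg[symmetric]] unfolding E(1,2) .
  then have "(e * g) * (pu \<mu> q - (2 * e * \<gamma>2 q * \<mu> q + e * \<nu> q * \<beta>2 q)) = 0" by algebra
  moreover have "e \<noteq> 0" "g \<noteq> 0" using E(3,4) by simp_all
  ultimately have "pu \<mu> q = 2 * e * \<gamma>2 q * \<mu> q + e * \<nu> q * \<beta>2 q" by simp
  then show ?thesis unfolding eg .
qed

lemma cod3: assumes q: "q \<in> U" shows "pu \<nu> q = 2 * sqrt (fE z q) * \<gamma>2 q * \<nu> q + sqrt (fE z q) * \<mu> q * \<beta>2 q"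
proof -
  have g1: "\<forall>q\<in>U. \<gamma>1 q = 0" using g10 by auto
  have C: "\<forall>q\<in>U. n1 q \<bullet> Z21 q = 0"
    using g1 sq by (auto simp: V IP orth)
  have C': "n1 q \<bullet> pv Z21 q + pv n1 q \<bullet> Z21 q = 0"
    by (rule HV_zero_on[OF U q C HV_inner[OF HZ(8)[OF q] HZ2(3)[OF q]]])
  have D: "\<forall>q\<in>U. n1 q \<bullet> Z22 q = - (fG z q * \<nu> q)"
    using g1 sq by (auto simp: V IP orth D1)
  have D': "n1 q \<bullet> pu Z22 q + pu n1 q \<bullet> Z22 q = - (fG z q * pu \<nu> q + (Z2 q \<bullet> Z21 q + Z21 q \<bullet> Z2 q) * \<nu> q)"
    by (rule HU_unique_on[OF U q D HU_inner[OF HZ(7)[OF q] HZ2(4)[OF q]]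
          HU_minus[OF HU_mult[OF HE(3)[OF q] HZ(11)[OF q]]]])
  have "- (fG z q * pu \<nu> q + (Z2 q \<bullet> Z21 q + Z21 q \<bullet> Z2 q) * \<nu> q) = pu n1 q \<bullet> Z22 q - pv n1 q \<bullet> Z21 q"
    using C' D' S3[OF q] by simp
  then have H: "\<gamma>2 q * (\<nu> q * (fG z q * sqrt (fE z q))) - fG z q * pu \<nu> q = - (fG z q * (\<gamma>2 q * (\<nu> q * fE z q)) / sqrt (fE z q)) - sqrt (fG z q) * sqrt (fE z q) * \<mu> q * (sqrt (fG z q) * \<beta>2 q)"
    unfolding V[OF q] using q pos[OF q] by (simp add: IP orth D1 g1)
  obtain e g where eg: "e = sqrt (fE z q)" "g = sqrt (fG z q)" by simp
  have E: "fE z q = e * e" "fG z q = g * g" "e > 0" "g > 0" using eg sq[OF q] by auto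
  have "\<gamma>2 q * (\<nu> q * ((g * g) * e)) - (g * g) * pu \<nu> q = - ((g * g) * (\<gamma>2 q * (\<nu> q * (e * e))) / e) - g * e * \<mu> q * (g * \<beta>2 q)"
    using H[unfolded eg[symmetric]] unfolding E(1,2) .
  moreover have r: "(g * g) * (\<gamma>2 q * (\<nu> q * (e * e))) / e = (g * g) * (\<gamma>2 q * (\<nu> q * e))" using E by (simp add: field_simps)
  ultimately have "\<gamma>2 q * (\<nu> q * ((g * g) * e)) - (g * g) * pu \<nu> q = - ((g * g) * (\<gamma>2 q * (\<nu> q * e))) - g * e * \<mu> q * (g * \<beta>2 q)" by simp
  then have "(g * g) * (pu \<nu> q - (2 * e * \<gamma>2 q * \<nu> q + e * \<mu> q * \<beta>2 q)) = 0" by algebra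
  moreover have "e \<noteq> 0" "g \<noteq> 0" using E(3,4) by simp_all
  ultimately have "pu \<nu> q = 2 * e * \<gamma>2 q * \<nu> q + e * \<mu> q * \<beta>2 q" by simp
  then show ?thesis unfolding eg .
qed

lemma cod4: assumes q: "q \<in> U" shows "pv \<mu> q = - sqrt (fG z q) * \<nu> q * \<beta>1 q"
proof -
  have g1: "\<forall>q\<in>U. \<gamma>1 q = 0" using g10 by auto
  have C: "\<forall>q\<in>U. n2 q \<bullet> Z21 q = sqrt (fE z q) * sqrt (fG z q) * \<mu> q"
    using g1 sq by (auto simp: V IP orth)
  have C': "n2 q \<bullet> pv Z21 q + pv n2 q \<bullet> Z21 q = (sqrt (fE z q) * sqrt (fG z q)) * pv \<mu> q
      + (sqrt (fE z q) * gv q + ev q * sqrt (fG z q)) * \<mu> q"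
    by (rule HV_unique_on[OF U q C HV_inner[OF HZ(10)[OF q] HZ2(3)[OF q]]
          HV_mult[OF HV_mult[OF He(2)[OF q] He(4)[OF q]] HZ(14)[OF q]]])
  have D: "\<forall>q\<in>U. n2 q \<bullet> Z22 q = 0"
    using g1 sq by (auto simp: V IP orth D1)
  have D': "n2 q \<bullet> pu Z22 q + pu n2 q \<bullet> Z22 q = 0"
    by (rule HU_zero_on[OF U q D HU_inner[OF HZ(9)[OF q] HZ2(4)[OF q]]])
  have "(sqrt (fE z q) * sqrt (fG z q)) * pv \<mu> q
      + (sqrt (fE z q) * gv q + ev q * sqrt (fG z q)) * \<mu> q = pv n2 q \<bullet> Z21 q - pu n2 q \<bullet> Z22 q"
    using C' D' S3[OF q] by simp
  then have H: "sqrt (fE z q) * sqrt (fG z q) * pv \<mu> q = - (fG z q * (\<nu> q * (sqrt (fE z q) * \<beta>1 q)))"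
    unfolding V[OF q] using q pos[OF q] by (simp add: IP orth D1 g1)
  obtain e g where eg: "e = sqrt (fE z q)" "g = sqrt (fG z q)" by simp
  have E: "fE z q = e * e" "fG z q = g * g" "e > 0" "g > 0" using eg sq[OF q] by auto
  have "e * g * pv \<mu> q = - ((g * g) * (\<nu> q * (e * \<beta>1 q)))"
    using H[unfolded eg[symmetric]] unfolding E(1,2) .
  then have "(e * g) * (pv \<mu> q - (- g * \<nu> q * \<beta>1 q)) = 0" by algebra
  moreover have "e \<noteq> 0" "g \<noteq> 0" using E(3,4) by simp_all
  ultimately have "pv \<mu> q = - g * \<nu> q * \<beta>1 q" by simp
  then show ?thesis unfolding eg .
qed

lemma Ev0: assumes q: "q \<in> U" shows "pv (fE z) q = 0"
proof -
  have "pv (fE z) q = Z1 q \<bullet> Z12 q + Z12 q \<bullet> Z1 q" using HV_pv[OF HE(2)[OF q]] .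
  moreover have "(Z1 q \<bullet> Z12 q + Z12 q \<bullet> Z1 q) / (2 * sqrt (fE z q)) = 0" using D1(1)[OF q] by (simp add: ev_def)
  ultimately show ?thesis using sq[OF q] by simp
qed

lemma HZ3: assumes q: "q \<in> U" shows "HV (pu \<mu>) (pv (pu \<mu>) q) q" "HV (pu \<nu>) (pv (pu \<nu>) q) q"
  "HU (pv \<mu>) (pu (pv \<mu>) q) q" "HU (pv \<nu>) (pu (pv \<nu>) q) q"
  "HU (pv \<gamma>2) (pu (pv \<gamma>2) q) q" "HV (pu \<gamma>2) (pv (pu \<gamma>2) q) q"
  "pv (pu \<mu>) q = pu (pv \<mu>) q" "pv (pu \<nu>) q = pu (pv \<nu>) q" "pv (pu \<gamma>2) q = pu (pv \<gamma>2) q"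
  using smooth_HV[OF U smooth_pu[OF sm(4)] q] smooth_HV[OF U smooth_pu[OF sm(3)] q]
    smooth_HU[OF U smooth_pv[OF sm(4)] q] smooth_HU[OF U smooth_pv[OF sm(3)] q]
    smooth_HU[OF U smooth_pv[OF sm(5)] q] smooth_HV[OF U smooth_pu[OF sm(5)] q]
    smooth_schwarz[OF U sm(4) q] smooth_schwarz[OF U sm(3) q] smooth_schwarz[OF U sm(5) q]
  by simp_all


lemma g2v: assumes q: "q \<in> U" shows "pv \<gamma>2 q = 0"
proof -
  have I: "\<forall>q\<in>U. 4 * sqrt (fE z q) * \<gamma>2 q * ((\<mu> q)^2 - (\<nu> q)^2) = 2 * \<mu> q * pu \<mu> q - 2 * \<nu> q * pu \<nu> q"
  proof
    fix q assume q: "q \<in> U"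
    show "4 * sqrt (fE z q) * \<gamma>2 q * ((\<mu> q)^2 - (\<nu> q)^2) = 2 * \<mu> q * pu \<mu> q - 2 * \<nu> q * pu \<nu> q"
      unfolding cod2[OF q] cod3[OF q] by algebra
  qed
  have I': "(4 * sqrt (fE z q) * \<gamma>2 q) * (2 * \<mu> q * pv \<mu> q - 2 * \<nu> q * pv \<nu> q)
       + ((4 * sqrt (fE z q)) * pv \<gamma>2 q + (4 * ev q + 0 * sqrt (fE z q)) * \<gamma>2 q) * ((\<mu> q)^2 - (\<nu> q)^2)
     = ((2 * \<mu> q) * pv (pu \<mu>) q + (2 * pv \<mu> q + 0 * \<mu> q) * pu \<mu> q)
       - ((2 * \<nu> q) * pv (pu \<nu>) q + (2 * pv \<nu> q + 0 * \<nu> q) * pu \<nu> q)"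
    by (rule HV_unique_on[OF U q I
        HV_mult[OF HV_mult[OF HV_mult[OF HV_const He(2)[OF q]] HZ(16)[OF q]] HV_diff[OF HV_sq[OF HZ(14)[OF q]] HV_sq[OF HZ(12)[OF q]]]]
        HV_diff[OF HV_mult[OF HV_mult[OF HV_const HZ(14)[OF q]] HZ3(1)[OF q]] HV_mult[OF HV_mult[OF HV_const HZ(12)[OF q]] HZ3(2)[OF q]]]])
  have J1: "\<forall>q\<in>U. pv \<mu> q = - sqrt (fG z q) * \<nu> q * \<beta>1 q" using cod4 by auto
  have J1': "pu (pv \<mu>) q = (- sqrt (fG z q) * \<nu> q) * pu \<beta>1 q + (- sqrt (fG z q) * pu \<nu> q + - gu q * \<nu> q) * \<beta>1 q"
    by (rule HU_unique_on[OF U q J1 HZ3(3)[OF q] HU_mult[OF HU_mult[OF HU_minus[OF He(3)[OF q]] HZ(11)[OF q]] HZ(17)[OF q]]])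
  have J2: "\<forall>q\<in>U. pv \<nu> q = - sqrt (fG z q) * \<mu> q * \<beta>1 q" using cod1 by auto
  have J2': "pu (pv \<nu>) q = (- sqrt (fG z q) * \<mu> q) * pu \<beta>1 q + (- sqrt (fG z q) * pu \<mu> q + - gu q * \<mu> q) * \<beta>1 q"
    by (rule HU_unique_on[OF U q J2 HZ3(4)[OF q] HU_mult[OF HU_mult[OF HU_minus[OF He(3)[OF q]] HZ(13)[OF q]] HZ(17)[OF q]]])
  have "(4 * sqrt (fE z q) * ((\<mu> q)^2 - (\<nu> q)^2)) * pv \<gamma>2 q = 0"
    using I' J1' J2' HZ3(7,8)[OF q] cod1[OF q] cod4[OF q] D1(1)[OF q] by algebra
  moreover have "sqrt (fE z q) \<noteq> 0" using sq[OF q] by simp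
  moreover have "(\<mu> q)^2 - (\<nu> q)^2 \<noteq> 0" using GF q by auto
  ultimately show ?thesis by simp
qed

lemma b1: assumes q: "q \<in> U" shows "\<beta>1 q = 0"
proof -
  have I: "\<forall>q\<in>U. pu \<gamma>2 q = sqrt (fE z q) * ((\<gamma>2 q)^2 - (\<mu> q)^2 - (\<nu> q)^2)" using gauss by auto
  have I': "pv (pu \<gamma>2) q = sqrt (fE z q) * ((2 * \<gamma>2 q * pv \<gamma>2 q - 2 * \<mu> q * pv \<mu> q) - 2 * \<nu> q * pv \<nu> q)
       + ev q * ((\<gamma>2 q)^2 - (\<mu> q)^2 - (\<nu> q)^2)"
    by (rule HV_unique_on[OF U q I HZ3(6)[OF q]
        HV_mult[OF He(2)[OF q] HV_diff[OF HV_diff[OF HV_sq[OF HZ(16)[OF q]] HV_sq[OF HZ(14)[OF q]]] HV_sq[OF HZ(12)[OF q]]]]])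
  have Z: "\<forall>q\<in>U. pv \<gamma>2 q = 0" using g2v by auto
  have Z': "pu (pv \<gamma>2) q = 0" by (rule HU_zero_on[OF U q Z HZ3(5)[OF q]])
  have "(4 * sqrt (fE z q) * sqrt (fG z q) * \<mu> q * \<nu> q) * \<beta>1 q = 0"
    using I' Z' HZ3(9)[OF q] g2v[OF q] cod1[OF q] cod4[OF q] D1(1)[OF q] by algebra
  moreover have "sqrt (fE z q) \<noteq> 0" "sqrt (fG z q) \<noteq> 0" using sq[OF q] by simp_all
  moreover have "\<mu> q \<noteq> 0" "\<nu> q \<noteq> 0" using GF q by auto
  ultimately show ?thesis by simp
qed

lemma muv: "q \<in> U \<Longrightarrow> pv \<mu> q = 0" using cod4 b1 by simp
lemma nuv: "q \<in> U \<Longrightarrow> pv \<nu> q = 0" using cod1 b1 by simp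

lemma b2v: assumes q: "q \<in> U" shows "pv \<beta>2 q = 0"
proof -
  have I: "\<forall>q\<in>U. sqrt (fE z q) * \<mu> q * \<beta>2 q = pu \<nu> q - 2 * sqrt (fE z q) * \<gamma>2 q * \<nu> q"
    using cod3 by auto
  have I': "(sqrt (fE z q) * \<mu> q) * pv \<beta>2 q + (sqrt (fE z q) * pv \<mu> q + ev q * \<mu> q) * \<beta>2 q
     = pv (pu \<nu>) q - ((2 * sqrt (fE z q) * \<gamma>2 q) * pv \<nu> q + ((2 * sqrt (fE z q)) * pv \<gamma>2 q + (2 * ev q + 0 * sqrt (fE z q)) * \<gamma>2 q) * \<nu> q)"
    by (rule HV_unique_on[OF U q I HV_mult[OF HV_mult[OF He(2)[OF q] HZ(14)[OF q]] HZ(20)[OF q]]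
        HV_diff[OF HZ3(2)[OF q] HV_mult[OF HV_mult[OF HV_mult[OF HV_const He(2)[OF q]] HZ(16)[OF q]] HZ(12)[OF q]]]])
  have Z: "\<forall>q\<in>U. pv \<nu> q = 0" using nuv by auto
  have Z': "pu (pv \<nu>) q = 0" by (rule HU_zero_on[OF U q Z HZ3(4)[OF q]])
  have "(sqrt (fE z q) * \<mu> q) * pv \<beta>2 q = 0"
    using I' Z' HZ3(8)[OF q] g2v[OF q] nuv[OF q] muv[OF q] D1(1)[OF q] by algebra
  moreover have "sqrt (fE z q) \<noteq> 0" using sq[OF q] by simp_all
  moreover have "\<mu> q \<noteq> 0" using GF q by auto
  ultimately show ?thesis by simp
qed

lemma g2formula: assumes q: "q \<in> U"
  shows "\<gamma>2 q = (1 / (4 * sqrt (fE z q))) * pu (\<lambda>q. ln \<bar>(\<mu> q)\<^sup>2 - (\<nu> q)\<^sup>2\<bar>) q"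
proof -
  have P: "(\<mu> q)\<^sup>2 - (\<nu> q)\<^sup>2 \<noteq> 0" using GF q by auto
  have "pu (\<lambda>q. ln \<bar>(\<mu> q)\<^sup>2 - (\<nu> q)\<^sup>2\<bar>) q = (2 * \<mu> q * pu \<mu> q - 2 * \<nu> q * pu \<nu> q) / ((\<mu> q)\<^sup>2 - (\<nu> q)\<^sup>2)"
    by (rule HU_pu[OF HU_lnabs[OF HU_diff[OF HU_sq[OF HZ(13)[OF q]] HU_sq[OF HZ(11)[OF q]]] P]])
  also have "2 * \<mu> q * pu \<mu> q - 2 * \<nu> q * pu \<nu> q = (4 * sqrt (fE z q) * \<gamma>2 q) * ((\<mu> q)\<^sup>2 - (\<nu> q)\<^sup>2)"
    unfolding cod2[OF q] cod3[OF q] by algebra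
  finally have "pu (\<lambda>q. ln \<bar>(\<mu> q)\<^sup>2 - (\<nu> q)\<^sup>2\<bar>) q = 4 * sqrt (fE z q) * \<gamma>2 q" using P by simp
  then show ?thesis using sq[OF q] by simp
qed

lemma b2formula: assumes q: "q \<in> U"
  shows "\<beta>2 q = (1 / sqrt (fE z q)) * pu (\<lambda>q. ln (sqrt \<bar>(\<mu> q + \<nu> q) / (\<mu> q - \<nu> q)\<bar>)) q"
proof -
  have P: "\<mu> q + \<nu> q \<noteq> 0" "\<mu> q - \<nu> q \<noteq> 0"
  proof -
    have "(\<mu> q)\<^sup>2 - (\<nu> q)\<^sup>2 \<noteq> 0" using GF q by auto
    then have "(\<mu> q + \<nu> q) * (\<mu> q - \<nu> q) \<noteq> 0" by (simp add: power2_eq_square algebra_simps)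
    then show "\<mu> q + \<nu> q \<noteq> 0" "\<mu> q - \<nu> q \<noteq> 0" by auto
  qed
  have Q: "(\<mu> q + \<nu> q) / (\<mu> q - \<nu> q) \<noteq> 0" using P by simp
  define a where "a = pu \<mu> q"
  define b where "b = pu \<nu> q"
  have "pu (\<lambda>q. ln (sqrt \<bar>(\<mu> q + \<nu> q) / (\<mu> q - \<nu> q)\<bar>)) q
      = (((a + b) * (\<mu> q - \<nu> q) - (\<mu> q + \<nu> q) * (a - b)) / (\<mu> q - \<nu> q)\<^sup>2) / (2 * ((\<mu> q + \<nu> q) / (\<mu> q - \<nu> q)))"
    unfolding a_def b_def
    by (rule HU_pu[OF HU_lnsqrtabs[OF HU_div[OF HU_add[OF HZ(13)[OF q] HZ(11)[OF q]] HU_diff[OF HZ(13)[OF q] HZ(11)[OF q]] P(2)] Q]])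
  also have "((a + b) * (\<mu> q - \<nu> q) - (\<mu> q + \<nu> q) * (a - b)) = (2 * sqrt (fE z q) * \<beta>2 q) * ((\<mu> q + \<nu> q) * (\<mu> q - \<nu> q))"
    unfolding a_def b_def cod2[OF q] cod3[OF q] by algebra
  also have "(2 * sqrt (fE z q) * \<beta>2 q) * ((\<mu> q + \<nu> q) * (\<mu> q - \<nu> q)) / (\<mu> q - \<nu> q)\<^sup>2 / (2 * ((\<mu> q + \<nu> q) / (\<mu> q - \<nu> q)))
      = sqrt (fE z q) * \<beta>2 q"
    by (subst aux_div[OF P]) simp
  finally show ?thesis using sq[OF q] by simp
qed

lemma result: assumes p: "p \<in> U" shows
  "pv (fE z) p = 0 \<and> pv \<mu> p = 0 \<and> pv \<nu> p = 0 \<and> pv \<gamma>2 p = 0 \<and> pv \<beta>2 p = 0 \<and>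
           \<beta>1 p = 0 \<and>
           \<gamma>2 p = (1 / (4 * sqrt (fE z p))) * pu (\<lambda>q. ln \<bar>(\<mu> q)\<^sup>2 - (\<nu> q)\<^sup>2\<bar>) p \<and>
           \<beta>2 p = (1 / sqrt (fE z p)) * pu (\<lambda>q. ln (sqrt \<bar>(\<mu> q + \<nu> q) / (\<mu> q - \<nu> q)\<bar>)) p"
  using Ev0[OF p] muv[OF p] nuv[OF p] g2v[OF p] b2v[OF p] b1[OF p] g2formula[OF p] b2formula[OF p] by blast

end

theorem mainTheorem11:
  fixes U :: "(real \<times> real) set"
    and z n1 n2 :: "real \<times> real \<Rightarrow> real^4"
    and \<nu> \<mu> \<gamma>1 \<gamma>2 \<beta>1 \<beta>2 :: "real \<times> real \<Rightarrow> real"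
  assumes "open U"
    and "smooth_on2 U z"
    and "\<forall>p\<in>U. fE z p * fG z p - (fF z p)\<^sup>2 > 0"
    and "\<forall>p\<in>U. fF z p = 0"
    and "geometric_frame U z n1 n2 \<nu> \<mu> \<gamma>1 \<gamma>2 \<beta>1 \<beta>2"
    and "minimal_general_type U z n1 n2"
    and "\<forall>p\<in>U. \<gamma>1 p = 0"
  shows "\<forall>p\<in>U.
           pv (fE z) p = 0 \<and> pv \<mu> p = 0 \<and> pv \<nu> p = 0 \<and> pv \<gamma>2 p = 0 \<and> pv \<beta>2 p = 0 \<and>
           \<beta>1 p = 0 \<and>
           \<gamma>2 p = (1 / (4 * sqrt (fE z p))) * pu (\<lambda>q. ln \<bar>(\<mu> q)\<^sup>2 - (\<nu> q)\<^sup>2\<bar>) p \<and>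
           \<beta>2 p = (1 / sqrt (fE z p)) * pu (\<lambda>q. ln (sqrt \<bar>(\<mu> q + \<nu> q) / (\<mu> q - \<nu> q)\<bar>)) p"
proof -
  interpret surf U z n1 n2 \<nu> \<mu> \<gamma>1 \<gamma>2 \<beta>1 \<beta>2
    using assms by unfold_locales auto
  show ?thesis using result by blast
qed

end
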